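(* Let $f$ be an L-additive arithmetic function whose associated completely multiplicative function $h_f$ is nonzero-valued, and let $\Lambda_f$ be the generalized von Mangoldt function associated to $f$. Then for every integer $n\geq 1$, $$f(n)=h_f(n)\sum_{d\mid n}\Lambda_f(d),$$ i.e. in terms of Dirichlet convolution, $f=h_f\ast (h_f\Lambda_f)$.
   Context: An arithmetic function is a function $\mathbb{N}\to\mathbb{C}$. An arithmetic function $f$ is L-additive (Leibniz-additive) if there is a completely multiplicative function $h_f$ (so $h_f(1)=1$ and $h_f(mn)=h_f(m)h_f(n)$ for all $m,n$) such that $f(mn)=f(m)h_f(n)+f(n)h_f(m)$ for all positive integers $m,n$; such an $h_f$ is fixed. The generalized von Mangoldt function is defined by $\Lambda_f(n)=\frac{f(p)}{h_f(p)}$ if $n=p^k$ for some prime $p$ and integer $k\geq 1$, and $\Lambda_f(n)=0$ otherwise. The Dirichlet convolution is $(F\ast G)(n)=\sum_{d\mid n}F(d)G(n/d)$, and $h_f\Lambda_f$ denotes the pointwise product. *)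

theory Defs
  imports Complex_Main "HOL-Computational_Algebra.Primes"
begin

text \<open>Arithmetic functions are modelled as functions nat \<Rightarrow> complex; only values at
  positive integers are meaningful.\<close>

definition completely_multiplicative :: "(nat \<Rightarrow> complex) \<Rightarrow> bool" where
  "completely_multiplicative h \<longleftrightarrow>
     h 1 = 1 \<and> (\<forall>m n. m > 0 \<longrightarrow> n > 0 \<longrightarrow> h (m * n) = h m * h n)"

definition L_additive_wrt :: "(nat \<Rightarrow> complex) \<Rightarrow> (nat \<Rightarrow> complex) \<Rightarrow> bool" where
  "L_additive_wrt f h \<longleftrightarrow> completely_multiplicative h \<and>
     (\<forall>m n. m > 0 \<longrightarrow> n > 0 \<longrightarrow> f (m * n) = f m * h n + f n * h m)"

definition gen_mangoldt :: "(nat \<Rightarrow> complex) \<Rightarrow> (nat \<Rightarrow> complex) \<Rightarrow> nat \<Rightarrow> complex" where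
  "gen_mangoldt f h n =
     (if \<exists>p k. prime p \<and> k \<ge> 1 \<and> n = p ^ k
      then (let p = (THE p. prime p \<and> (\<exists>k\<ge>1. n = p ^ k)) in f p / h p)
      else 0)"

definition dirichlet_conv :: "(nat \<Rightarrow> complex) \<Rightarrow> (nat \<Rightarrow> complex) \<Rightarrow> nat \<Rightarrow> complex" where
  "dirichlet_conv F G n = (\<Sum>d | d dvd n. F d * G (n div d))"

end

theory Submission
  imports Defs "HOL-Number_Theory.Prime_Powers"
begin

lemma gm_primepow:
  assumes "prime p" "k > 0"
  shows "gen_mangoldt f h (p ^ k) = f p / h p"
proof -
  have ex: "\<exists>p' k'. prime p' \<and> k' \<ge> 1 \<and> p ^ k = p' ^ k'" using assms by (intro exI[of _ p] exI[of _ k]) auto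
  have "(THE q. prime q \<and> (\<exists>j\<ge>1. p ^ k = q ^ j)) = p"
  proof (rule the_equality)
    show "prime p \<and> (\<exists>j\<ge>1. p ^ k = p ^ j)" using assms by (intro conjI exI[of _ k]) auto
  next
    fix q assume "prime q \<and> (\<exists>j\<ge>1. p ^ k = q ^ j)"
    then obtain j where "prime q" "j \<ge> 1" "p ^ k = q ^ j" by auto
    then show "q = p" using prime_power_inj'(1)[of p q k j] assms by auto
  qed
  then show ?thesis using ex unfolding gen_mangoldt_def by (simp add: Let_def)
qed

lemma gm_not_primepow:
  assumes "\<not> primepow d"
  shows "gen_mangoldt f h d = 0"
  proof -
  have "\<not> (\<exists>p k. prime p \<and> k \<ge> 1 \<and> d = p ^ k)"
    using assms unfolding primepow_def by (metis One_nat_def Suc_le_eq)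
  then show ?thesis unfolding gen_mangoldt_def by (simp only: if_not_P if_False)
qed

theorem theorem2p1:
  fixes f h :: "nat \<Rightarrow> complex"
  assumes "L_additive_wrt f h"
    and "\<And>n. n \<ge> 1 \<Longrightarrow> h n \<noteq> 0"
  shows "\<forall>n\<ge>1. f n = h n * (\<Sum>d | d dvd n. gen_mangoldt f h d)
           \<and> f n = dirichlet_conv h (\<lambda>k. h k * gen_mangoldt f h k) n"
proof (intro allI impI)
  fix n :: nat assume n: "n \<ge> 1"
  define g where "g = (\<lambda>m. f m / h m)"
  have cm: "h 1 = 1" "\<And>a b. a > 0 \<Longrightarrow> b > 0 \<Longrightarrow> h (a * b) = h a * h b"
    using assms(1) unfolding L_additive_wrt_def completely_multiplicative_def by auto
  have fa: "\<And>a b. a > 0 \<Longrightarrow> b > 0 \<Longrightarrow> f (a * b) = f a * h b + f b * h a"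
    using assms(1) unfolding L_additive_wrt_def by auto
  have gadd: "g (a * b) = g a + g b" if "a > 0" "b > 0" for a b
  proof -
    have "h a \<noteq> 0" "h b \<noteq> 0" using assms(2) that by auto
    then show ?thesis using that cm(2) fa unfolding g_def by (simp add: field_simps)
  qed
  have "g 1 = g 1 + g 1" using gadd[of 1 1] by simp
  then have g1: "g 1 = 0" by simp
  have g1': "g (Suc 0) = 0" using g1 by simp
  have gpow: "g (p ^ k) = of_nat k * g p" if "p > 0" for p k
    using that by (induction k) (auto simp: g1' gadd algebra_simps)
  have gprod: "finite S \<Longrightarrow> (\<forall>x\<in>S. F x > 0) \<Longrightarrow> g (\<Prod>x\<in>S. F x) = (\<Sum>x\<in>S. g (F x))"
    for S :: "nat set" and F
  proof (induction S rule: finite_induct)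
    case empty then show ?case using g1 g1' by simp
  next
    case (insert x S)
    then show ?case by (simp add: gadd prod_pos)
  qed
  have n0: "n \<noteq> 0" using n by auto
  define A where "A = (SIGMA p:prime_factors n. {0<..multiplicity p n})"
  have S: "(\<Sum>d | d dvd n. gen_mangoldt f h d) = g n"
  proof -
    have "(\<Sum>d | d dvd n. gen_mangoldt f h d) = (\<Sum>d \<in> primepow_factors n. gen_mangoldt f h d)"
      using n0 by (intro sum.mono_neutral_cong_right) (auto simp: primepow_factors_def intro: ccontr dest: gm_not_primepow)
    also have "primepow_factors n = (\<lambda>(p,k). p ^ k) ` A"
      unfolding A_def by (subst primepow_factors_altdef[OF n0]) fast+
    also have "(\<Sum>d \<in> (\<lambda>(p,k). p ^ k) ` A. gen_mangoldt f h d) = (\<Sum>(p,k)\<in>A. gen_mangoldt f h (p ^ k))"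
      unfolding A_def
      by (subst sum.reindex)
         (auto simp: inj_on_def prime_power_inj'' prime_factors_multiplicity case_prod_unfold)
    also have "\<dots> = (\<Sum>(p,k)\<in>A. g p)"
      unfolding A_def g_def
      by (intro sum.cong refl) (auto simp: gm_primepow prime_factors_multiplicity)
    also have "\<dots> = (\<Sum>x\<in>prime_factors n. \<Sum>k\<in>{0<..multiplicity x n}. g x)"
      unfolding A_def by (rule sum.Sigma [symmetric]) auto
    also have "\<dots> = (\<Sum>x\<in>prime_factors n. g (x ^ multiplicity x n))"
      by (intro sum.cong refl) (simp add: gpow prime_gt_0_nat in_prime_factors_imp_prime)
    also have "\<dots> = g (\<Prod>x\<in>prime_factors n. x ^ multiplicity x n)"
      by (rule gprod[symmetric]) (auto simp: prime_gt_0_nat in_prime_factors_imp_prime)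
    also have "(\<Prod>x\<in>prime_factors n. x ^ multiplicity x n) = n"
      using n0 by (intro prime_factorization_nat [symmetric]) simp
    finally show ?thesis .
  qed
  have hn: "h n \<noteq> 0" using assms(2) n by auto
  have 1: "f n = h n * (\<Sum>d | d dvd n. gen_mangoldt f h d)"
    using S hn by (simp add: g_def)
  have "dirichlet_conv h (\<lambda>k. h k * gen_mangoldt f h k) n
      = (\<Sum>d | d dvd n. h n * gen_mangoldt f h (n div d))"
    unfolding dirichlet_conv_def
  proof (intro sum.cong refl)
    fix d assume "d \<in> {d. d dvd n}"
    then obtain e where e: "n = d * e" by auto
    with n0 have "d > 0" "e > 0" by auto
    then show "h d * (h (n div d) * gen_mangoldt f h (n div d)) = h n * gen_mangoldt f h (n div d)"
      using e cm(2) by simp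
  qed
  also have "\<dots> = h n * (\<Sum>d | d dvd n. gen_mangoldt f h (n div d))"
    by (simp add: sum_distrib_left)
  also have "(\<Sum>d | d dvd n. gen_mangoldt f h (n div d)) = (\<Sum>d | d dvd n. gen_mangoldt f h d)"
    using n0 by (intro sum.reindex_bij_witness[where i="\<lambda>d. n div d" and j="\<lambda>d. n div d"])
      (auto elim!: dvdE)
  finally show "f n = h n * (\<Sum>d | d dvd n. gen_mangoldt f h d)
           \<and> f n = dirichlet_conv h (\<lambda>k. h k * gen_mangoldt f h k) n" using 1 by simp
qed

end
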